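(* Let $k$ be a positive integer and let $K\subset\mathbb{R}^d$ be a centrally symmetric convex body. Let $\mathcal{K}=\{o_i+\tau_iK: i=1,\dots,n\}$ with $o_i\in\mathbb{R}^d$ and $\tau_1,\dots,\tau_n>0$. Suppose every hyperplane in $\mathbb{R}^d$ intersects the interiors of at most $k$ members of $\mathcal{K}$. Then some translate of $\frac1k\left(\sum_{i=1}^n\tau_i\right)K$ is contained in $\operatorname{conv}\bigcup\mathcal{K}$.
   Context: A convex body is a compact convex set with nonempty interior. *)

theory Defs
  imports "HOL-Analysis.Analysis"
begin

definition convex_body :: "'a::euclidean_space set \<Rightarrow> bool" where
  "convex_body K \<longleftrightarrow> compact K \<and> convex K \<and> interior K \<noteq> {}"

definition centrally_symmetric :: "'a::euclidean_space set \<Rightarrow> bool" where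
  "centrally_symmetric K \<longleftrightarrow> (\<exists>c. \<forall>x. x \<in> K \<longleftrightarrow> 2 *\<^sub>R c - x \<in> K)"

definition hyperplane :: "'a::euclidean_space set \<Rightarrow> bool" where
  "hyperplane H \<longleftrightarrow> (\<exists>a b. a \<noteq> 0 \<and> H = {x. a \<bullet> x = b})"

end

theory Submission
  imports Defs
begin

lemma dd: "((\<lambda>x. \<alpha>*x + \<beta>*x^2/2) has_field_derivative (\<alpha> + \<beta>*x)) (at x within S)" for \<alpha> \<beta> x :: real
  by (auto intro!: derivative_eq_intros)
lemma s0: "p \<le> q \<Longrightarrow> ((\<lambda>x. \<alpha> + \<beta>*x) has_integral ((\<lambda>x. \<alpha>*x + \<beta>*x^2/2) q - (\<lambda>x. \<alpha>*x + \<beta>*x^2/2) p)) {p..q}" for p q \<alpha> \<beta> :: real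
  apply (rule fundamental_theorem_of_calculus)
   apply assumption
  using dd[of \<alpha> \<beta>] has_real_derivative_iff_has_vector_derivative by blast
lemma s1: "(\<lambda>x. \<alpha>*x + \<beta>*x^2/2) q - (\<lambda>x. \<alpha>*x + \<beta>*x^2/2) p = \<alpha>*(q-p) + \<beta>*(q^2-p^2)/2" for p q \<alpha> \<beta> :: real
    by (simp add: field_simps)
lemma s2: "((\<lambda>x. \<alpha> + \<beta>*x) has_integral (\<alpha>*(q-p) + \<beta>*(q^2-p^2)/2)) {p..q} \<Longrightarrow> ((\<lambda>x. \<alpha> + \<beta>*x) has_integral (\<alpha>*(q-p) + \<beta>*(q^2-p^2)/2)) (cbox p q)" for p q \<alpha> \<beta> :: real
    by simp
lemma s3: "((\<lambda>x. \<alpha> + \<beta>*x) has_integral (\<alpha>*(q-p) + \<beta>*(q^2-p^2)/2)) (cbox p q) \<Longrightarrow> lo \<le> p \<Longrightarrow> q \<le> hi \<Longrightarrow> ((\<lambda>x. if x \<in> cbox p q then \<alpha> + \<beta>*x else 0) has_integral (\<alpha>*(q-p) + \<beta>*(q^2-p^2)/2)) (cbox lo hi)" for p q lo hi \<alpha> \<beta> :: real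
proof -
  assume a: "((\<lambda>x. \<alpha> + \<beta>*x) has_integral (\<alpha>*(q-p) + \<beta>*(q^2-p^2)/2)) (cbox p q)" and l: "lo \<le> p" and r: "q \<le> hi"
  have "cbox p q \<subseteq> cbox lo hi" unfolding cbox_interval using l r by auto
  then show ?thesis by (rule has_integral_restrict_closed_subinterval[OF a])
qed
lemma s4: "((\<lambda>x. if x \<in> cbox p q then \<alpha> + \<beta>*x else 0) has_integral (\<alpha>*(q-p) + \<beta>*(q^2-p^2)/2)) (cbox lo hi) \<Longrightarrow> ((\<lambda>x. if x \<in> {p<..<q} then \<alpha> + \<beta> * x else 0) has_integral (\<alpha>*(q-p) + \<beta>*(q^2-p^2)/2)) {lo..hi}" for p q lo hi \<alpha> \<beta> :: real
proof -
  assume a: "((\<lambda>x. if x \<in> cbox p q then \<alpha> + \<beta>*x else 0) has_integral (\<alpha>*(q-p) + \<beta>*(q^2-p^2)/2)) (cbox lo hi)"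
  have e: "(if x \<in> {p<..<q} then \<alpha> + \<beta> * x else 0) = (if x \<in> {p..q} then \<alpha> + \<beta>*x else 0)"
    if "x \<in> {lo..hi} - {p,q}" for x
    using that by auto
  show ?thesis
    by (rule has_integral_spike_finite[where S="{p,q}", OF _ e a[unfolded cbox_interval]]) auto
qed

lemma int_aff:
  fixes p q lo hi \<alpha> \<beta> :: real
  assumes "p \<le> q" "lo \<le> p" "q \<le> hi"
  shows "((\<lambda>x. if x \<in> {p<..<q} then \<alpha> + \<beta> * x else 0) has_integral (\<alpha>*(q-p) + \<beta>*(q^2-p^2)/2)) {lo..hi}"
  using s4[OF s3[OF s2[OF s0[OF assms(1), unfolded s1]] assms(2,3)]] .

lemma oneD:
  fixes a s :: "nat \<Rightarrow> real" and I :: "nat set" and k :: nat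
  assumes fin: "finite I" and ne: "I \<noteq> {}" and pos: "\<And>i. i\<in>I \<Longrightarrow> s i > 0" and k: "k > 0"
    and cov: "\<And>x. card {i\<in>I. a i - s i < x \<and> x < a i + s i} \<le> k"
  shows "(\<Sum>i\<in>I. s i * a i) / (\<Sum>i\<in>I. s i) + (\<Sum>i\<in>I. s i) / real k \<le> Max ((\<lambda>i. a i + s i) ` I)"
proof -
  define M where "M = Max ((\<lambda>i. a i + s i) ` I)"
  define S where "S = (\<Sum>i\<in>I. s i)"
  define L where "L = 2 * S / real k"
  have Spos: "S > 0" unfolding S_def using fin ne pos by (intro sum_pos) auto
  have kpos: "real k > 0" using k by simp
  have Lpos: "L > 0" unfolding L_def using Spos kpos by simp
  have Mge: "\<And>i. i \<in> I \<Longrightarrow> a i + s i \<le> M" unfolding M_def using fin by (intro Max_ge) auto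
  define lo where "lo = min (Min ((\<lambda>i. a i - s i) ` I)) (M - L)"
  have lo1: "\<And>i. i \<in> I \<Longrightarrow> lo \<le> a i - s i" unfolding lo_def using fin
    by (metis (no_types, lifting) Min_le finite_imageI image_eqI min.coboundedI1)
  have lo2: "lo \<le> M - L" unfolding lo_def by simp
  define F where "F x = (\<Sum>i\<in>I. if x \<in> {a i - s i<..<a i + s i} then 1 else 0::real)" for x
  define G where "G x = (if x \<in> {M-L<..<M} then real k else 0)" for x
  have Fk: "F x \<le> real k" for x
  proof -
    have "F x = (\<Sum>i\<in>{i\<in>I. a i - s i < x \<and> x < a i + s i}. 1)"
      unfolding F_def using fin by (subst sum.inter_filter) auto
    also have "\<dots> = real (card {i\<in>I. a i - s i < x \<and> x < a i + s i})" by simp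
    also have "\<dots> \<le> real k" using cov[of x] by simp
    finally show ?thesis .
  qed
  have F0: "F x \<ge> 0" for x unfolding F_def by (intro sum_nonneg) auto
  have FM: "F M = 0" unfolding F_def using Mge by (intro sum.neutral) force
  have IF1: "((\<lambda>x. \<Sum>i\<in>I. if x \<in> {a i - s i<..<a i + s i} then M + (-1) * x else 0) has_integral
      (\<Sum>i\<in>I. M * ((a i + s i) - (a i - s i)) + (-1) * ((a i + s i)^2 - (a i - s i)^2)/2)) {lo..M}"
    using pos lo1 Mge by (intro has_integral_sum fin int_aff) (auto simp: less_imp_le)
  have IF0: "((\<lambda>x. \<Sum>i\<in>I. if x \<in> {a i - s i<..<a i + s i} then 1 + 0 * x else 0) has_integral
      (\<Sum>i\<in>I. 1 * ((a i + s i) - (a i - s i)) + 0 * ((a i + s i)^2 - (a i - s i)^2)/2)) {lo..M}"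
    using pos lo1 Mge by (intro has_integral_sum fin int_aff) (auto simp: less_imp_le)
  have IG1: "((\<lambda>x. if x \<in> {M-L<..<M} then real k * M + (- real k) * x else 0) has_integral
      (real k * M * (M - (M - L)) + (- real k) * (M^2 - (M-L)^2)/2)) {lo..M}"
    using Lpos lo2 by (intro int_aff) auto
  have IG0: "((\<lambda>x. if x \<in> {M-L<..<M} then real k + 0 * x else 0) has_integral
      (real k * (M - (M - L)) + 0 * (M^2 - (M-L)^2)/2)) {lo..M}"
    using Lpos lo2 by (intro int_aff) auto
  have e1: "(\<lambda>x. \<Sum>i\<in>I. if x \<in> {a i - s i<..<a i + s i} then M + (-1) * x else 0) = (\<lambda>x. (M - x) * F x)"
    unfolding F_def by (auto simp: sum_distrib_left intro!: sum.cong)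
  have e0: "(\<lambda>x. \<Sum>i\<in>I. if x \<in> {a i - s i<..<a i + s i} then 1 + 0 * x else 0) = F"
    unfolding F_def by (intro ext sum.cong) simp_all
  have eG1: "(\<lambda>x. if x \<in> {M-L<..<M} then real k * M + (- real k) * x else 0) = (\<lambda>x. (M - x) * G x)"
    unfolding G_def by (auto simp: algebra_simps)
  have eG0: "(\<lambda>x. if x \<in> {M-L<..<M} then real k + 0 * x else 0) = G"
    unfolding G_def by auto
  have v1: "(\<Sum>i\<in>I. M * ((a i + s i) - (a i - s i)) + (-1) * ((a i + s i)^2 - (a i - s i)^2)/2) = 2 * (M * S - (\<Sum>i\<in>I. s i * a i))"
    unfolding S_def by (simp add: sum_distrib_left sum_subtractf power2_eq_square algebra_simps)
  have v0: "(\<Sum>i\<in>I. 1 * ((a i + s i) - (a i - s i)) + 0 * ((a i + s i)^2 - (a i - s i)^2)/2) = 2 * S"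
    unfolding S_def by (simp add: sum_distrib_left)
  have A: "((\<lambda>x. (M - x) * F x - (M - x) * G x) has_integral (2 * (M * S - (\<Sum>i\<in>I. s i * a i)) - (real k * M * (M - (M - L)) + (- real k) * (M^2 - (M-L)^2)/2))) {lo..M}"
    using has_integral_diff[OF IF1[unfolded e1 v1] IG1[unfolded eG1]] by simp
  have B: "((\<lambda>x. L * (F x - G x)) has_integral (L * (2 * S - (real k * (M - (M - L)) + 0 * (M^2 - (M-L)^2)/2)))) {lo..M}"
    using has_integral_mult_right[OF has_integral_diff[OF IF0[unfolded e0 v0] IG0[unfolded eG0]], of L] by simp
  have pw: "L * (F x - G x) \<le> (M - x) * F x - (M - x) * G x" if x: "x \<in> {lo..M}" for x
  proof (cases "x \<in> {M-L<..<M}")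
    case True
    then have "G x = real k" unfolding G_def by simp
    moreover have "(L - (M - x)) * (F x - real k) \<le> 0"
      using True Fk[of x] by (intro mult_nonneg_nonpos) auto
    ultimately show ?thesis by (simp add: algebra_simps)
  next
    case False
    then have G: "G x = 0" unfolding G_def by auto
    show ?thesis
    proof (cases "x = M")
      case True then show ?thesis using G FM by simp
    next
      case False
      with x \<open>x \<notin> {M-L<..<M}\<close> have "x \<le> M - L" by auto
      then have "L * F x \<le> (M - x) * F x" using F0[of x] by (intro mult_right_mono) auto
      then show ?thesis using G by simp
    qed
  qed
  have "L * (2 * S - (real k * (M - (M - L)) + 0 * (M^2 - (M-L)^2)/2)) \<le>
        2 * (M * S - (\<Sum>i\<in>I. s i * a i)) - (real k * M * (M - (M - L)) + (- real k) * (M^2 - (M-L)^2)/2)"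
    by (rule has_integral_le[OF B A pw])
  then have "0 \<le> 2 * (M * S - (\<Sum>i\<in>I. s i * a i)) - real k * L^2 / 2"
    unfolding L_def using kpos by (simp add: field_simps power2_eq_square)
  then have "0 \<le> 2 * (M * S - (\<Sum>i\<in>I. s i * a i)) - 2 * S^2 / real k"
    unfolding L_def using kpos by (simp add: field_simps power2_eq_square)
  then have "(\<Sum>i\<in>I. s i * a i) + S^2 / real k \<le> M * S" by simp
  then have "((\<Sum>i\<in>I. s i * a i) + S^2 / real k) / S \<le> M"
    using Spos by (simp add: divide_le_eq)
  then show ?thesis unfolding M_def[symmetric] S_def[symmetric]
    using Spos by (simp add: add_divide_distrib power2_eq_square)
qed


lemma interior_img:
  fixes K :: "'a::euclidean_space set"
  assumes w: "w \<in> interior K" and t: "t > 0"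
  shows "c + t *\<^sub>R w \<in> interior ((\<lambda>x. c + x) ` ((\<lambda>x. t *\<^sub>R x) ` K))"
proof -
  obtain e where e: "e > 0" "ball w e \<subseteq> K" using w unfolding mem_interior by blast
  have sub: "ball (c + t *\<^sub>R w) (t * e) \<subseteq> (\<lambda>x. c + x) ` ((\<lambda>x. t *\<^sub>R x) ` K)"
  proof
    fix z assume z: "z \<in> ball (c + t *\<^sub>R w) (t * e)"
    define y where "y = (1/t) *\<^sub>R (z - c)"
    have zy: "z = c + t *\<^sub>R y" unfolding y_def using t by simp
    have d1: "dist (c + t *\<^sub>R w) z < t * e" using z by simp
    have "c + t *\<^sub>R w - z = t *\<^sub>R (w - y)" unfolding zy by (simp add: scaleR_diff_right)
    then have "dist (c + t *\<^sub>R w) z = t * dist w y" using t by (simp add: dist_norm)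
    then have "t * dist w y < t * e" using d1 by simp
    then have "dist w y < e" using t by simp
    then have "y \<in> K" using e by auto
    then show "z \<in> (\<lambda>x. c + x) ` ((\<lambda>x. t *\<^sub>R x) ` K)" using zy by blast
  qed
  have te: "t * e > 0" by (rule mult_pos_pos[OF t e(1)])
  show ?thesis unfolding mem_interior by (rule exI[of _ "t*e"], rule conjI[OF te sub])
qed

theorem theorem9:
  fixes K :: "'a::euclidean_space set"
    and k n :: nat and c :: "nat \<Rightarrow> 'a" and \<tau> :: "nat \<Rightarrow> real"
  assumes "k > 0" and "n \<ge> 1"
    and "convex_body K" and "centrally_symmetric K"
    and "\<And>i. i \<in> {1..n} \<Longrightarrow> \<tau> i > 0"
    and "\<And>H. hyperplane H \<Longrightarrow>
           card {i \<in> {1..n}. H \<inter> interior ((\<lambda>x. c i + x) ` ((\<lambda>x. \<tau> i *\<^sub>R x) ` K)) \<noteq> {}} \<le> k"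
  shows "\<exists>t. (\<lambda>x. t + x) ` ((\<lambda>x. ((\<Sum>i=1..n. \<tau> i) / real k) *\<^sub>R x) ` K)
           \<subseteq> convex hull (\<Union>i\<in>{1..n}. (\<lambda>x. c i + x) ` ((\<lambda>x. \<tau> i *\<^sub>R x) ` K))"
proof -
  note kpos = assms(1) and tpos = assms(5) and hyp = assms(6)
  have cK: "compact K" "convex K" "interior K \<noteq> {}" using assms(3) unfolding convex_body_def by auto
  obtain c0 where sym: "\<And>x. x \<in> K \<longleftrightarrow> 2 *\<^sub>R c0 - x \<in> K"
    using assms(4) unfolding centrally_symmetric_def by auto
  define S where "S = (\<Sum>i=1..n. \<tau> i)"
  define lam where "lam = S / real k"
  define ctr where "ctr i = c i + \<tau> i *\<^sub>R c0" for i
  define p0 where "p0 = (1/S) *\<^sub>R (\<Sum>i=1..n. \<tau> i *\<^sub>R ctr i)"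
  define P where "P i = (\<lambda>x. c i + x) ` ((\<lambda>x. \<tau> i *\<^sub>R x) ` K)" for i
  define C where "C = convex hull (\<Union>i\<in>{1..n}. P i)"
  have Spos: "S > 0" unfolding S_def using assms(2) tpos by (intro sum_pos) auto
  have lam0: "lam \<ge> 0" unfolding lam_def using Spos by simp
  have Kne: "K \<noteq> {}" using cK(3) interior_subset by blast
  have compC: "compact C" unfolding C_def P_def
    by (intro compact_convex_hull compact_UN finite_atLeastAtMost compact_translation compact_scaling cK(1))
  have convC: "convex C" unfolding C_def by simp
  have PC: "P i \<subseteq> C" if i: "i \<in> {1..n}" for i
  proof -
    have "P i \<subseteq> (\<Union>i\<in>{1..n}. P i)" using i by blast
    then show ?thesis unfolding C_def using hull_subset by (rule subset_trans)
  qed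
  obtain x0 where x0: "x0 \<in> K" using Kne by blast
  have "c 1 + \<tau> 1 *\<^sub>R x0 \<in> P 1" unfolding P_def using x0 by (intro imageI)
  moreover have "(1::nat) \<in> {1..n}" using assms(2) by simp
  ultimately have Cne: "C \<noteq> {}" using PC by blast
  obtain z where z: "z \<in> interior K" using cK(3) by blast
  have z2: "2 *\<^sub>R c0 - z \<in> interior K"
  proof -
    obtain e where e: "e > 0" "ball z e \<subseteq> K" using z unfolding mem_interior by blast
    have "ball (2 *\<^sub>R c0 - z) e \<subseteq> K"
    proof
      fix y assume "y \<in> ball (2 *\<^sub>R c0 - z) e"
      then have d: "dist (2 *\<^sub>R c0 - z) y < e" by simp
      have "z - (2 *\<^sub>R c0 - y) = - ((2 *\<^sub>R c0 - z) - y)" by (simp add: algebra_simps)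
      then have "dist z (2 *\<^sub>R c0 - y) = dist (2 *\<^sub>R c0 - z) y"
        by (simp only: dist_norm norm_minus_cancel)
      then have "2 *\<^sub>R c0 - y \<in> ball z e" using d by simp
      then show "y \<in> K" using e(2) sym[of y] by blast
    qed
    then show ?thesis unfolding mem_interior using e(1) by blast
  qed
  have c0int: "c0 \<in> interior K"
  proof -
    have "(1/2) *\<^sub>R z + (1/2) *\<^sub>R (2 *\<^sub>R c0 - z) \<in> interior K"
      by (rule convexD[OF convex_interior[OF cK(2)] z z2]) auto
    moreover have "(1/2) *\<^sub>R z + (1/2) *\<^sub>R (2 *\<^sub>R c0 - z) = c0" by (simp add: algebra_simps)
    ultimately show ?thesis by simp
  qed
  have main: "p0 - lam *\<^sub>R c0 + lam *\<^sub>R x \<in> C" if x: "x \<in> K" for x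
  proof (rule ccontr)
    define q where "q = p0 - lam *\<^sub>R c0 + lam *\<^sub>R x"
    assume "\<not> ?thesis"
    then have "q \<notin> C" unfolding q_def .
    then obtain a b where ab: "a \<bullet> q < b" "\<forall>y\<in>C. b < a \<bullet> y"
      using separating_hyperplane_closed_point[OF convC compact_imp_closed[OF compC]] by blast
    define u where "u = - a"
    have uC: "u \<bullet> y < u \<bullet> q" if y: "y \<in> C" for y
    proof -
      have "b < a \<bullet> y" using ab(2) y by blast
      then show ?thesis unfolding u_def using ab(1) by simp
    qed
    have u0: "u \<noteq> 0"
    proof
      assume "u = 0"
      obtain y where "y \<in> C" using Cne by blast
      from uC[OF this] \<open>u = 0\<close> show False by simp
    qed
    obtain ys where ys: "ys \<in> K" "\<And>y. y \<in> K \<Longrightarrow> u \<bullet> y \<le> u \<bullet> ys"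
    proof -
      have "continuous_on K (\<lambda>y. u \<bullet> y)" by (intro continuous_intros)
      from continuous_attains_sup[OF cK(1) Kne this] show ?thesis using that by blast
    qed
    define h where "h = u \<bullet> ys - u \<bullet> c0"
    have hpos: "h > 0"
    proof -
      obtain e where e: "e > 0" "ball c0 e \<subseteq> K" using c0int by (auto simp: mem_interior)
      define y where "y = c0 + (e / 2 / norm u) *\<^sub>R u"
      have "dist c0 y = e/2" unfolding y_def using u0 e by (simp add: dist_norm)
      then have "y \<in> K" using e by auto
      then have "u \<bullet> y \<le> u \<bullet> ys" by (rule ys(2))
      moreover have "u \<bullet> y = u \<bullet> c0 + (e/2) * norm u" unfolding y_def using u0
        by (simp add: inner_add_right power2_norm_eq_inner[symmetric] power2_eq_square)
      moreover have "(e/2) * norm u > 0" using e u0 by simp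
      ultimately show ?thesis unfolding h_def by linarith
    qed
    have xh: "u \<bullet> (x - c0) \<le> h" using ys(2)[OF x] unfolding h_def by (simp add: inner_diff_right)
    define aa where "aa i = u \<bullet> ctr i" for i
    define ss where "ss i = \<tau> i * h" for i
    have cov: "card {i\<in>{1..n}. aa i - ss i < x0 \<and> x0 < aa i + ss i} \<le> k" for x0
    proof -
      define H where "H = {y. u \<bullet> y = x0}"
      have hH: "hyperplane H" unfolding hyperplane_def H_def using u0 by blast
      have "{i\<in>{1..n}. aa i - ss i < x0 \<and> x0 < aa i + ss i} \<subseteq>
            {i \<in> {1..n}. H \<inter> interior ((\<lambda>x. c i + x) ` ((\<lambda>x. \<tau> i *\<^sub>R x) ` K)) \<noteq> {}}"
      proof safe
        fix i assume i: "i \<in> {1..n}" and l: "aa i - ss i < x0" and r: "x0 < aa i + ss i"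
        have ti: "\<tau> i > 0" using tpos i by simp
        have ssp: "ss i > 0" unfolding ss_def using ti hpos by simp
        define th where "th = (x0 - aa i) / ss i"
        have th1: "\<bar>th\<bar> < 1" unfolding th_def using l r ssp by (auto simp: abs_less_iff divide_less_eq less_divide_eq)
        define yy where "yy = (if th \<ge> 0 then ys else 2 *\<^sub>R c0 - ys)"
        have yyK: "yy \<in> K" unfolding yy_def using ys(1) sym[of ys] by auto
        have uyy: "u \<bullet> (yy - c0) = sgn th * h + (if th = 0 then h else 0)"
          unfolding yy_def h_def by (auto simp: inner_diff_right algebra_simps)
        define w where "w = c0 + \<bar>th\<bar> *\<^sub>R (yy - c0)"
        have "yy - (1 - \<bar>th\<bar>) *\<^sub>R (yy - c0) \<in> interior K"
          using th1 yyK closure_subset by (intro mem_interior_closure_convex_shrink cK(2) c0int) auto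
        moreover have "yy - (1 - \<bar>th\<bar>) *\<^sub>R (yy - c0) = w" unfolding w_def by (simp add: algebra_simps)
        ultimately have w: "w \<in> interior K" by simp
        have uw: "u \<bullet> (w - c0) = th * h"
        proof -
          have "u \<bullet> (w - c0) = \<bar>th\<bar> * (u \<bullet> (yy - c0))" unfolding w_def by simp
          also have "\<dots> = th * h" unfolding uyy by (auto simp: sgn_if)
          finally show ?thesis .
        qed
        have "u \<bullet> (c i + \<tau> i *\<^sub>R w) = aa i + \<tau> i * (u \<bullet> (w - c0))"
          unfolding aa_def ctr_def by (simp add: inner_add_right inner_diff_right algebra_simps)
        also have "\<dots> = x0" unfolding uw th_def ss_def using ti hpos by (simp add: field_simps)
        finally have "c i + \<tau> i *\<^sub>R w \<in> H" unfolding H_def by simp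
        moreover have "c i + \<tau> i *\<^sub>R w \<in> interior ((\<lambda>x. c i + x) ` ((\<lambda>x. \<tau> i *\<^sub>R x) ` K))"
          by (rule interior_img[OF w ti])
        moreover assume "H \<inter> interior ((\<lambda>x. c i + x) ` ((\<lambda>x. \<tau> i *\<^sub>R x) ` K)) = {}"
        ultimately show False by blast
      qed
      then have "card {i\<in>{1..n}. aa i - ss i < x0 \<and> x0 < aa i + ss i} \<le>
            card {i \<in> {1..n}. H \<inter> interior ((\<lambda>x. c i + x) ` ((\<lambda>x. \<tau> i *\<^sub>R x) ` K)) \<noteq> {}}"
        by (intro card_mono) auto
      also have "\<dots> \<le> k" by (rule hyp[OF hH])
      finally show ?thesis .
    qed
    have ssp: "\<And>i. i \<in> {1..n} \<Longrightarrow> ss i > 0" unfolding ss_def using tpos hpos by simp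
    have ne: "{1..n} \<noteq> {}" using assms(2) by simp
    have ineq: "(\<Sum>i\<in>{1..n}. ss i * aa i) / (\<Sum>i\<in>{1..n}. ss i) + (\<Sum>i\<in>{1..n}. ss i) / real k
        \<le> Max ((\<lambda>i. aa i + ss i) ` {1..n})"
      by (rule oneD[OF finite_atLeastAtMost ne ssp kpos cov])
    have e1: "(\<Sum>i\<in>{1..n}. ss i) = h * S" unfolding ss_def S_def by (simp add: sum_distrib_left mult.commute)
    have e2: "(\<Sum>i\<in>{1..n}. ss i * aa i) = h * (\<Sum>i\<in>{1..n}. \<tau> i * aa i)"
      unfolding ss_def by (simp add: sum_distrib_left algebra_simps)
    have up0: "u \<bullet> p0 = (\<Sum>i\<in>{1..n}. \<tau> i * aa i) / S"
      unfolding p0_def aa_def by (simp add: inner_sum_right)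
    have lhs: "(\<Sum>i\<in>{1..n}. ss i * aa i) / (\<Sum>i\<in>{1..n}. ss i) + (\<Sum>i\<in>{1..n}. ss i) / real k
        = u \<bullet> p0 + lam * h"
      unfolding e1 e2 up0 lam_def using hpos by simp
    obtain j where j: "j \<in> {1..n}" "Max ((\<lambda>i. aa i + ss i) ` {1..n}) = aa j + ss j"
    proof -
      have "Max ((\<lambda>i. aa i + ss i) ` {1..n}) \<in> (\<lambda>i. aa i + ss i) ` {1..n}"
        using ne by (intro Max_in) auto
      then show ?thesis using that by blast
    qed
    have YC: "c j + \<tau> j *\<^sub>R ys \<in> C" using PC[OF j(1)] ys(1) unfolding P_def by blast
    have uY: "u \<bullet> (c j + \<tau> j *\<^sub>R ys) = aa j + ss j"
      unfolding aa_def ss_def ctr_def h_def by (simp add: inner_add_right algebra_simps)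
    have "u \<bullet> q = u \<bullet> p0 + lam * (u \<bullet> (x - c0))"
      unfolding q_def by (simp add: inner_add_right inner_diff_right algebra_simps)
    also have "\<dots> \<le> u \<bullet> p0 + lam * h" using xh lam0 by (simp add: mult_left_mono)
    also have "\<dots> \<le> aa j + ss j" using ineq lhs j(2) by simp
    also have "\<dots> < u \<bullet> q" using uC[OF YC] uY by simp
    finally show False by simp
  qed
  show ?thesis
  proof (rule exI[of _ "p0 - lam *\<^sub>R c0"], rule subsetI)
    fix w assume "w \<in> (\<lambda>x. (p0 - lam *\<^sub>R c0) + x) ` ((\<lambda>x. ((\<Sum>i=1..n. \<tau> i) / real k) *\<^sub>R x) ` K)"
    then obtain x where x: "x \<in> K" and w: "w = p0 - lam *\<^sub>R c0 + lam *\<^sub>R x"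
      unfolding lam_def S_def by blast
    have "w \<in> C" using main[OF x] w by simp
    then show "w \<in> convex hull (\<Union>i\<in>{1..n}. (\<lambda>x. c i + x) ` ((\<lambda>x. \<tau> i *\<^sub>R x) ` K))"
      unfolding C_def P_def .
  qed
qed

end
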